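(* For $n\geq1$ let $\ell_n=\sqrt[n]{n!}$ and $x_n=\log(\ell_{n+1}/\ell_n)$. Then for every integer $n\geq 468$, $$\frac{\ell_{n+2}}{\ell_{n+1}}+\frac{\ell_n}{\ell_{n+1}}=2\exp\Big(\frac{x_{n+1}-x_n}{2}\Big)\cosh\Big(\frac{x_{n+1}+x_n}{2}\Big)\leq 2\bigg(1-\frac{25}{144n^3}-\frac{1}{4n^4}+\frac{\tfrac12\log n+\tfrac{101}{288}+\tfrac12\log(2\pi)}{n^5}\bigg)<2.$$
   Context: $\log$ denotes the natural logarithm. *)

theory Defs
  imports Complex_Main
begin

definition ell :: "nat \<Rightarrow> real" where
  "ell n = root n (fact n)"

definition xseq :: "nat \<Rightarrow> real" where
  "xseq n = ln (ell (Suc n) / ell n)"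

end

theory Submission
  imports Defs
begin


lemma G1:
  fixes t e m a :: real
  assumes "0 \<le> t" "t \<le> e" "0 \<le> m" "m \<le> a"
  shows "t^(3+k) * m^j \<le> a^j * e^k * t^3"
proof -
  have "t^k \<le> e^k" using assms by (intro power_mono) auto
  moreover have "m^j \<le> a^j" using assms by (intro power_mono) auto
  ultimately have "t^k * m^j \<le> e^k * a^j"
    using assms by (intro mult_mono) auto
  hence *: "t^3 * (t^k * m^j) \<le> t^3 * (e^k * a^j)" using assms by (intro mult_left_mono) auto
  have "t^(3+k) * m^j = t^3 * (t^k * m^j)" by (subst power_add) (simp add: mult.assoc)
  also have "\<dots> \<le> t^3 * (e^k * a^j)" by (rule *)
  also have "\<dots> = a^j * e^k * t^3" by (simp add: mult_ac)
  finally show ?thesis .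
qed

lemma G2:
  fixes t e m a b :: real
  assumes "0 \<le> t" "t \<le> e" "0 \<le> m" "m \<le> a" "m^2 \<le> b * t" "0 \<le> b"
  shows "t^(2+k) * m^(2+j) \<le> b * a^j * e^k * t^3"
proof -
  have 1: "t^(3+k) * m^j \<le> a^j * e^k * t^3" using G1 assms(1-4) by blast
  have "t^(2+k) * m^(2+j) = (t^(2+k) * m^j) * m^2" by (subst power_add[of m]) (simp add: mult_ac)
  also have "\<dots> \<le> (t^(2+k) * m^j) * (b*t)"
    using assms by (intro mult_left_mono) auto
  also have "\<dots> = b * (t^(3+k) * m^j)"
  proof -
    have "(3::nat)+k = Suc (2+k)" by simp
    hence "t^(3+k) = t^(2+k) * t" by (simp only: power_Suc2)
    thus ?thesis by (simp add: mult_ac)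
  qed
  also have "\<dots> \<le> b * (a^j * e^k * t^3)" using 1 assms(6) by (rule mult_left_mono)
  finally show ?thesis by (simp add: mult_ac)
qed



lemma polyA:
  fixes t m Y p :: real
  assumes t0: "0 < t" and te: "t \<le> 1/468" and m0: "0 \<le> m" and ma: "m \<le> 1/64" and mb: "m^2 \<le> 1/9 * t"
    and Yd: "Y = t - (t * m)/2 - 2*t^2 + t^2 * m + 2*t^3" and pd: "p = t - t^2 - (t * m)/2 - t^3/2"
  shows "1 + Y + Y^2/2 + Y^3/6 + Y^4/12 + (1 - p + p^2/2 - p^3/6 + p^4/24) \<le> 2 - 25/72*t^3 - t^4/2"
proof -
  define Yn where "Yn = 2 * (t) + (-1) * (t * m) + (-4) * (t^2) + 2 * (t^2 * m) + 4 * (t^3)"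
  define pn where "pn = 2 * (t) + (-1) * (t * m) + (-2) * (t^2) + (-1) * (t^3)"
  have Y1: "Y = Yn/2" using Yd unfolding Yn_def by (simp add: field_simps)
  have p1: "p = pn/2" using pd unfolding pn_def by (simp add: field_simps)
  have Ypw: "Y^2 = Yn^2/4" "Y^3 = Yn^3/8" "Y^4 = Yn^4/16" unfolding Y1 by (simp_all add: power_divide)
  have ppw: "p^2 = pn^2/4" "p^3 = pn^3/8" "p^4 = pn^4/16" unfolding p1 by (simp_all add: power_divide)
  define QQ where "QQ = (-288) * (t^2 * m^2) + 176 * (t^3) + (-2880) * (t^3 * m) + 576 * (t^3 * m^2) + (-4752) * (t^4) + 2304 * (t^4 * m) + (-72) * (t^4 * m^2) + (-72) * (t^4 * m^3) + (-9) * (t^4 * m^4) + 1824 * (t^5) + 480 * (t^5 * m) + (-792) * (t^5 * m^2) + (-120) * (t^5 * m^3) + 48 * (t^5 * m^4) + 816 * (t^6) + (-1296) * (t^6 * m) + (-1728) * (t^6 * m^2) + 1044 * (t^6 * m^3) + (-144) * (t^6 * m^4) + 528 * (t^7) + (-7176) * (t^7 * m) + 6840 * (t^7 * m^2) + (-2112) * (t^7 * m^3) + 192 * (t^7 * m^4) + (-8424) * (t^8) + 16824 * (t^8 * m) + (-9810) * (t^8 * m^2) + 1920 * (t^8 * m^3) + (-96) * (t^8 * m^4) + 13848 * (t^9) + (-18504) * (t^9 * m) + 6912 * (t^9 * m^2) + (-768) * (t^9 * m^3) + (-12336) * (t^10) + 10740 * (t^10 * m) + (-2304) * (t^10 * m^2)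 + 6120 * (t^11) + (-3072) * (t^11 * m) + (-1539) * (t^12)"
  have id: "2304 - 400*t^3 - 576*t^4 - 6*(192 + 96*Yn + 24*Yn^2 + 4*Yn^3 + Yn^4) - 3*(384 - 192*pn + 48*pn^2 - 8*pn^3 + pn^4) = QQ"
    unfolding Yn_def pn_def QQ_def by algebra
  have b0: "t^2 * m^2 \<le> (1/9) * t^3"
    using G2[of t "1/468" m "1/64" "1/9" 0 0] t0 te m0 ma mb by (simp add: power_one_over)
  have s0: "(-32) * t^3 \<le> (-288) * (t^2 * m^2)" using  b0 t0 by linarith
  have b1: "0 \<le> t^3" using t0 m0 by simp
  have s1: "144 * t^3 \<le> (-288) * (t^2 * m^2) + 176 * (t^3)" using s0 b1 t0 by linarith
  have b2: "t^3 * m \<le> (1/64) * t^3"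
    using G1[of t "1/468" m "1/64" 0 1] t0 te m0 ma mb by (simp add: power_one_over)
  have s2: "99 * t^3 \<le> (-288) * (t^2 * m^2) + 176 * (t^3) + (-2880) * (t^3 * m)" using s1 b2 t0 by linarith
  have b3: "0 \<le> t^3 * m^2" using t0 m0 by simp
  have s3: "99 * t^3 \<le> (-288) * (t^2 * m^2) + 176 * (t^3) + (-2880) * (t^3 * m) + 576 * (t^3 * m^2)" using s2 b3 t0 by linarith
  have b4: "t^4 \<le> (1/468) * t^3"
    using G1[of t "1/468" m "1/64" 1 0] t0 te m0 ma mb by (simp add: power_one_over)
  have s4: "(1155/13) * t^3 \<le> (-288) * (t^2 * m^2) + 176 * (t^3) + (-2880) * (t^3 * m) + 576 * (t^3 * m^2) + (-4752) * (t^4)" using s3 b4 t0 by linarith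
  have b5: "0 \<le> t^4 * m" using t0 m0 by simp
  have s5: "(1155/13) * t^3 \<le> (-288) * (t^2 * m^2) + 176 * (t^3) + (-2880) * (t^3 * m) + 576 * (t^3 * m^2) + (-4752) * (t^4) + 2304 * (t^4 * m)" using s4 b5 t0 by linarith
  have b6: "t^4 * m^2 \<le> (1/1971216) * t^3"
    using G2[of t "1/468" m "1/64" "1/9" 2 0] t0 te m0 ma mb by (simp add: power_one_over)
  have s6: "(2432429/27378) * t^3 \<le> (-288) * (t^2 * m^2) + 176 * (t^3) + (-2880) * (t^3 * m) + 576 * (t^3 * m^2) + (-4752) * (t^4) + 2304 * (t^4 * m) + (-72) * (t^4 * m^2)" using s5 b6 t0 by linarith
  have b7: "t^4 * m^3 \<le> (1/126157824) * t^3"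
    using G2[of t "1/468" m "1/64" "1/9" 2 1] t0 te m0 ma mb by (simp add: power_one_over)
  have s7: "(11975035/134784) * t^3 \<le> (-288) * (t^2 * m^2) + 176 * (t^3) + (-2880) * (t^3 * m) + 576 * (t^3 * m^2) + (-4752) * (t^4) + 2304 * (t^4 * m) + (-72) * (t^4 * m^2) + (-72) * (t^4 * m^3)" using s6 b7 t0 by linarith
  have b8: "t^4 * m^4 \<le> (1/8074100736) * t^3"
    using G2[of t "1/468" m "1/64" "1/9" 2 2] t0 te m0 ma mb by (simp add: power_one_over)
  have s8: "(79705832959/897122304) * t^3 \<le> (-288) * (t^2 * m^2) + 176 * (t^3) + (-2880) * (t^3 * m) + 576 * (t^3 * m^2) + (-4752) * (t^4) + 2304 * (t^4 * m) + (-72) * (t^4 * m^2) + (-72) * (t^4 * m^3) + (-9) * (t^4 * m^4)" using s7 b8 t0 by linarith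
  have b9: "0 \<le> t^5" using t0 m0 by simp
  have s9: "(79705832959/897122304) * t^3 \<le> (-288) * (t^2 * m^2) + 176 * (t^3) + (-2880) * (t^3 * m) + 576 * (t^3 * m^2) + (-4752) * (t^4) + 2304 * (t^4 * m) + (-72) * (t^4 * m^2) + (-72) * (t^4 * m^3) + (-9) * (t^4 * m^4) + 1824 * (t^5)" using s8 b9 t0 by linarith
  have b10: "0 \<le> t^5 * m" using t0 m0 by simp
  have s10: "(79705832959/897122304) * t^3 \<le> (-288) * (t^2 * m^2) + 176 * (t^3) + (-2880) * (t^3 * m) + 576 * (t^3 * m^2) + (-4752) * (t^4) + 2304 * (t^4 * m) + (-72) * (t^4 * m^2) + (-72) * (t^4 * m^3) + (-9) * (t^4 * m^4) + 1824 * (t^5) + 480 * (t^5 * m)" using s9 b10 t0 by linarith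
  have b11: "t^5 * m^2 \<le> (1/922529088) * t^3"
    using G2[of t "1/468" m "1/64" "1/9" 3 0] t0 te m0 ma mb by (simp add: power_one_over)
  have s11: "(9325582366091/104963309568) * t^3 \<le> (-288) * (t^2 * m^2) + 176 * (t^3) + (-2880) * (t^3 * m) + 576 * (t^3 * m^2) + (-4752) * (t^4) + 2304 * (t^4 * m) + (-72) * (t^4 * m^2) + (-72) * (t^4 * m^3) + (-9) * (t^4 * m^4) + 1824 * (t^5) + 480 * (t^5 * m) + (-792) * (t^5 * m^2)" using s10 b11 t0 by linarith
  have b12: "t^5 * m^3 \<le> (1/59041861632) * t^3"
    using G2[of t "1/468" m "1/64" "1/9" 3 1] t0 te m0 ma mb by (simp add: power_one_over)
  have s12: "(27976747097633/314889928704) * t^3 \<le> (-288) * (t^2 * m^2) + 176 * (t^3) + (-2880) * (t^3 * m) + 576 * (t^3 * m^2) + (-4752) * (t^4) + 2304 * (t^4 * m) + (-72) * (t^4 * m^2) + (-72) * (t^4 * m^3) + (-9) * (t^4 * m^4) + 1824 * (t^5) + 480 * (t^5 * m) + (-792) * (t^5 * m^2) + (-120) * (t^5 * m^3)" using s11 b12 t0 by linarith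
  have b13: "0 \<le> t^5 * m^4" using t0 m0 by simp
  have s13: "(27976747097633/314889928704) * t^3 \<le> (-288) * (t^2 * m^2) + 176 * (t^3) + (-2880) * (t^3 * m) + 576 * (t^3 * m^2) + (-4752) * (t^4) + 2304 * (t^4 * m) + (-72) * (t^4 * m^2) + (-72) * (t^4 * m^3) + (-9) * (t^4 * m^4) + 1824 * (t^5) + 480 * (t^5 * m) + (-792) * (t^5 * m^2) + (-120) * (t^5 * m^3) + 48 * (t^5 * m^4)" using s12 b13 t0 by linarith
  have b14: "0 \<le> t^6" using t0 m0 by simp
  have s14: "(27976747097633/314889928704) * t^3 \<le> (-288) * (t^2 * m^2) + 176 * (t^3) + (-2880) * (t^3 * m) + 576 * (t^3 * m^2) + (-4752) * (t^4) + 2304 * (t^4 * m) + (-72) * (t^4 * m^2) + (-72) * (t^4 * m^3) + (-9) * (t^4 * m^4) + 1824 * (t^5) + 480 * (t^5 * m) + (-792) * (t^5 * m^2) + (-120) * (t^5 * m^3) + 48 * (t^5 * m^4) + 816 * (t^6)" using s13 b14 t0 by linarith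
  have b15: "t^6 * m \<le> (1/6560206848) * t^3"
    using G1[of t "1/468" m "1/64" 3 1] t0 te m0 ma mb by (simp add: power_one_over)
  have s15: "(27976747035425/314889928704) * t^3 \<le> (-288) * (t^2 * m^2) + 176 * (t^3) + (-2880) * (t^3 * m) + 576 * (t^3 * m^2) + (-4752) * (t^4) + 2304 * (t^4 * m) + (-72) * (t^4 * m^2) + (-72) * (t^4 * m^3) + (-9) * (t^4 * m^4) + 1824 * (t^5) + 480 * (t^5 * m) + (-792) * (t^5 * m^2) + (-120) * (t^5 * m^3) + 48 * (t^5 * m^4) + 816 * (t^6) + (-1296) * (t^6 * m)" using s14 b15 t0 by linarith
  have b16: "t^6 * m^2 \<le> (1/431743613184) * t^3"
    using G2[of t "1/468" m "1/64" "1/9" 4 0] t0 te m0 ma mb by (simp add: power_one_over)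
  have s16: "(363697711444141/4093569073152) * t^3 \<le> (-288) * (t^2 * m^2) + 176 * (t^3) + (-2880) * (t^3 * m) + 576 * (t^3 * m^2) + (-4752) * (t^4) + 2304 * (t^4 * m) + (-72) * (t^4 * m^2) + (-72) * (t^4 * m^3) + (-9) * (t^4 * m^4) + 1824 * (t^5) + 480 * (t^5 * m) + (-792) * (t^5 * m^2) + (-120) * (t^5 * m^3) + 48 * (t^5 * m^4) + 816 * (t^6) + (-1296) * (t^6 * m) + (-1728) * (t^6 * m^2)" using s15 b16 t0 by linarith
  have b17: "0 \<le> t^6 * m^3" using t0 m0 by simp
  have s17: "(363697711444141/4093569073152) * t^3 \<le> (-288) * (t^2 * m^2) + 176 * (t^3) + (-2880) * (t^3 * m) + 576 * (t^3 * m^2) + (-4752) * (t^4) + 2304 * (t^4 * m) + (-72) * (t^4 * m^2) + (-72) * (t^4 * m^3) + (-9) * (t^4 * m^4) + 1824 * (t^5) + 480 * (t^5 * m) + (-792) * (t^5 * m^2) + (-120) * (t^5 * m^3) + 48 * (t^5 * m^4) + 816 * (t^6) + (-1296) * (t^6 * m) + (-1728) * (t^6 * m^2) + 1044 * (t^6 * m^3)" using s16 b17 t0 by linarith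
  have b18: "t^6 * m^4 \<le> (1/1768421839601664) * t^3"
    using G2[of t "1/468" m "1/64" "1/9" 4 2] t0 te m0 ma mb by (simp add: power_one_over)
  have s18: "(41965120551247/472334893056) * t^3 \<le> (-288) * (t^2 * m^2) + 176 * (t^3) + (-2880) * (t^3 * m) + 576 * (t^3 * m^2) + (-4752) * (t^4) + 2304 * (t^4 * m) + (-72) * (t^4 * m^2) + (-72) * (t^4 * m^3) + (-9) * (t^4 * m^4) + 1824 * (t^5) + 480 * (t^5 * m) + (-792) * (t^5 * m^2) + (-120) * (t^5 * m^3) + 48 * (t^5 * m^4) + 816 * (t^6) + (-1296) * (t^6 * m) + (-1728) * (t^6 * m^2) + 1044 * (t^6 * m^3) + (-144) * (t^6 * m^4)" using s17 b18 t0 by linarith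
  have b19: "0 \<le> t^7" using t0 m0 by simp
  have s19: "(41965120551247/472334893056) * t^3 \<le> (-288) * (t^2 * m^2) + 176 * (t^3) + (-2880) * (t^3 * m) + 576 * (t^3 * m^2) + (-4752) * (t^4) + 2304 * (t^4 * m) + (-72) * (t^4 * m^2) + (-72) * (t^4 * m^3) + (-9) * (t^4 * m^4) + 1824 * (t^5) + 480 * (t^5 * m) + (-792) * (t^5 * m^2) + (-120) * (t^5 * m^3) + 48 * (t^5 * m^4) + 816 * (t^6) + (-1296) * (t^6 * m) + (-1728) * (t^6 * m^2) + 1044 * (t^6 * m^3) + (-144) * (t^6 * m^4) + 528 * (t^7)" using s18 b19 t0 by linarith
  have b20: "t^7 * m \<le> (1/3070176804864) * t^3"
    using G1[of t "1/468" m "1/64" 4 1] t0 te m0 ma mb by (simp add: power_one_over)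
  have s20: "(41965120550143/472334893056) * t^3 \<le> (-288) * (t^2 * m^2) + 176 * (t^3) + (-2880) * (t^3 * m) + 576 * (t^3 * m^2) + (-4752) * (t^4) + 2304 * (t^4 * m) + (-72) * (t^4 * m^2) + (-72) * (t^4 * m^3) + (-9) * (t^4 * m^4) + 1824 * (t^5) + 480 * (t^5 * m) + (-792) * (t^5 * m^2) + (-120) * (t^5 * m^3) + 48 * (t^5 * m^4) + 816 * (t^6) + (-1296) * (t^6 * m) + (-1728) * (t^6 * m^2) + 1044 * (t^6 * m^3) + (-144) * (t^6 * m^4) + 528 * (t^7) + (-7176) * (t^7 * m)" using s19 b20 t0 by linarith
  have b21: "0 \<le> t^7 * m^2" using t0 m0 by simp
  have s21: "(41965120550143/472334893056) * t^3 \<le> (-288) * (t^2 * m^2) + 176 * (t^3) + (-2880) * (t^3 * m) + 576 * (t^3 * m^2) + (-4752) * (t^4) + 2304 * (t^4 * m) + (-72) * (t^4 * m^2) + (-72) * (t^4 * m^3) + (-9) * (t^4 * m^4) + 1824 * (t^5) + 480 * (t^5 * m) + (-792) * (t^5 * m^2) + (-120) * (t^5 * m^3) + 48 * (t^5 * m^4) + 816 * (t^6) + (-1296) * (t^6 * m) + (-1728) * (t^6 * m^2) + 1044 * (t^6 * m^3) + (-144) * (t^6 * m^4) + 528 * (t^7) + (-7176) * (t^7 * m) + 6840 * (t^7 * m^2)" using s20 b21 t0 by linarith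
  have b22: "t^7 * m^3 \<le> (1/12931584702087168) * t^3"
    using G2[of t "1/468" m "1/64" "1/9" 5 1] t0 te m0 ma mb by (simp add: power_one_over)
  have s22: "(191486845070302157/2155264117014528) * t^3 \<le> (-288) * (t^2 * m^2) + 176 * (t^3) + (-2880) * (t^3 * m) + 576 * (t^3 * m^2) + (-4752) * (t^4) + 2304 * (t^4 * m) + (-72) * (t^4 * m^2) + (-72) * (t^4 * m^3) + (-9) * (t^4 * m^4) + 1824 * (t^5) + 480 * (t^5 * m) + (-792) * (t^5 * m^2) + (-120) * (t^5 * m^3) + 48 * (t^5 * m^4) + 816 * (t^6) + (-1296) * (t^6 * m) + (-1728) * (t^6 * m^2) + 1044 * (t^6 * m^3) + (-144) * (t^6 * m^4) + 528 * (t^7) + (-7176) * (t^7 * m) + 6840 * (t^7 * m^2) + (-2112) * (t^7 * m^3)" using s21 b22 t0 by linarith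
  have b23: "0 \<le> t^7 * m^4" using t0 m0 by simp
  have s23: "(191486845070302157/2155264117014528) * t^3 \<le> (-288) * (t^2 * m^2) + 176 * (t^3) + (-2880) * (t^3 * m) + 576 * (t^3 * m^2) + (-4752) * (t^4) + 2304 * (t^4 * m) + (-72) * (t^4 * m^2) + (-72) * (t^4 * m^3) + (-9) * (t^4 * m^4) + 1824 * (t^5) + 480 * (t^5 * m) + (-792) * (t^5 * m^2) + (-120) * (t^5 * m^3) + 48 * (t^5 * m^4) + 816 * (t^6) + (-1296) * (t^6 * m) + (-1728) * (t^6 * m^2) + 1044 * (t^6 * m^3) + (-144) * (t^6 * m^4) + 528 * (t^7) + (-7176) * (t^7 * m) + 6840 * (t^7 * m^2) + (-2112) * (t^7 * m^3) + 192 * (t^7 * m^4)" using s22 b23 t0 by linarith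
  have b24: "t^8 \<le> (1/22450667885568) * t^3"
    using G1[of t "1/468" m "1/64" 5 0] t0 te m0 ma mb by (simp add: power_one_over)
  have s24: "(191486845069493453/2155264117014528) * t^3 \<le> (-288) * (t^2 * m^2) + 176 * (t^3) + (-2880) * (t^3 * m) + 576 * (t^3 * m^2) + (-4752) * (t^4) + 2304 * (t^4 * m) + (-72) * (t^4 * m^2) + (-72) * (t^4 * m^3) + (-9) * (t^4 * m^4) + 1824 * (t^5) + 480 * (t^5 * m) + (-792) * (t^5 * m^2) + (-120) * (t^5 * m^3) + 48 * (t^5 * m^4) + 816 * (t^6) + (-1296) * (t^6 * m) + (-1728) * (t^6 * m^2) + 1044 * (t^6 * m^3) + (-144) * (t^6 * m^4) + 528 * (t^7) + (-7176) * (t^7 * m) + 6840 * (t^7 * m^2) + (-2112) * (t^7 * m^3) + 192 * (t^7 * m^4) + (-8424) * (t^8)" using s23 b24 t0 by linarith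
  have b25: "0 \<le> t^8 * m" using t0 m0 by simp
  have s25: "(191486845069493453/2155264117014528) * t^3 \<le> (-288) * (t^2 * m^2) + 176 * (t^3) + (-2880) * (t^3 * m) + 576 * (t^3 * m^2) + (-4752) * (t^4) + 2304 * (t^4 * m) + (-72) * (t^4 * m^2) + (-72) * (t^4 * m^3) + (-9) * (t^4 * m^4) + 1824 * (t^5) + 480 * (t^5 * m) + (-792) * (t^5 * m^2) + (-120) * (t^5 * m^3) + 48 * (t^5 * m^4) + 816 * (t^6) + (-1296) * (t^6 * m) + (-1728) * (t^6 * m^2) + 1044 * (t^6 * m^3) + (-144) * (t^6 * m^4) + 528 * (t^7) + (-7176) * (t^7 * m) + 6840 * (t^7 * m^2) + (-2112) * (t^7 * m^3) + 192 * (t^7 * m^4) + (-8424) * (t^8) + 16824 * (t^8 * m)" using s24 b25 t0 by linarith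
  have b26: "t^8 * m^2 \<le> (1/94562213134012416) * t^3"
    using G2[of t "1/468" m "1/64" "1/9" 6 0] t0 te m0 ma mb by (simp add: power_one_over)
  have s26: "(7467986957710235947/84055300563566592) * t^3 \<le> (-288) * (t^2 * m^2) + 176 * (t^3) + (-2880) * (t^3 * m) + 576 * (t^3 * m^2) + (-4752) * (t^4) + 2304 * (t^4 * m) + (-72) * (t^4 * m^2) + (-72) * (t^4 * m^3) + (-9) * (t^4 * m^4) + 1824 * (t^5) + 480 * (t^5 * m) + (-792) * (t^5 * m^2) + (-120) * (t^5 * m^3) + 48 * (t^5 * m^4) + 816 * (t^6) + (-1296) * (t^6 * m) + (-1728) * (t^6 * m^2) + 1044 * (t^6 * m^3) + (-144) * (t^6 * m^4) + 528 * (t^7) + (-7176) * (t^7 * m) + 6840 * (t^7 * m^2) + (-2112) * (t^7 * m^3) + 192 * (t^7 * m^4) + (-8424) * (t^8) + 16824 * (t^8 * m) + (-9810) * (t^8 * m^2)" using s25 b26 t0 by linarith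
  have b27: "0 \<le> t^8 * m^3" using t0 m0 by simp
  have s27: "(7467986957710235947/84055300563566592) * t^3 \<le> (-288) * (t^2 * m^2) + 176 * (t^3) + (-2880) * (t^3 * m) + 576 * (t^3 * m^2) + (-4752) * (t^4) + 2304 * (t^4 * m) + (-72) * (t^4 * m^2) + (-72) * (t^4 * m^3) + (-9) * (t^4 * m^4) + 1824 * (t^5) + 480 * (t^5 * m) + (-792) * (t^5 * m^2) + (-120) * (t^5 * m^3) + 48 * (t^5 * m^4) + 816 * (t^6) + (-1296) * (t^6 * m) + (-1728) * (t^6 * m^2) + 1044 * (t^6 * m^3) + (-144) * (t^6 * m^4) + 528 * (t^7) + (-7176) * (t^7 * m) + 6840 * (t^7 * m^2) + (-2112) * (t^7 * m^3) + 192 * (t^7 * m^4) + (-8424) * (t^8) + 16824 * (t^8 * m) + (-9810) * (t^8 * m^2) + 1920 * (t^8 * m^3)" using s26 b27 t0 by linarith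
  have b28: "t^8 * m^4 \<le> (1/387326824996914855936) * t^3"
    using G2[of t "1/468" m "1/64" "1/9" 6 2] t0 te m0 ma mb by (simp add: power_one_over)
  have s28: "(27574105690007025035/310358032850092032) * t^3 \<le> (-288) * (t^2 * m^2) + 176 * (t^3) + (-2880) * (t^3 * m) + 576 * (t^3 * m^2) + (-4752) * (t^4) + 2304 * (t^4 * m) + (-72) * (t^4 * m^2) + (-72) * (t^4 * m^3) + (-9) * (t^4 * m^4) + 1824 * (t^5) + 480 * (t^5 * m) + (-792) * (t^5 * m^2) + (-120) * (t^5 * m^3) + 48 * (t^5 * m^4) + 816 * (t^6) + (-1296) * (t^6 * m) + (-1728) * (t^6 * m^2) + 1044 * (t^6 * m^3) + (-144) * (t^6 * m^4) + 528 * (t^7) + (-7176) * (t^7 * m) + 6840 * (t^7 * m^2) + (-2112) * (t^7 * m^3) + 192 * (t^7 * m^4) + (-8424) * (t^8) + 16824 * (t^8 * m) + (-9810) * (t^8 * m^2) + 1920 * (t^8 * m^3) + (-96) * (t^8 * m^4)" using s27 b28 t0 by linarith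
  have b29: "0 \<le> t^9" using t0 m0 by simp
  have s29: "(27574105690007025035/310358032850092032) * t^3 \<le> (-288) * (t^2 * m^2) + 176 * (t^3) + (-2880) * (t^3 * m) + 576 * (t^3 * m^2) + (-4752) * (t^4) + 2304 * (t^4 * m) + (-72) * (t^4 * m^2) + (-72) * (t^4 * m^3) + (-9) * (t^4 * m^4) + 1824 * (t^5) + 480 * (t^5 * m) + (-792) * (t^5 * m^2) + (-120) * (t^5 * m^3) + 48 * (t^5 * m^4) + 816 * (t^6) + (-1296) * (t^6 * m) + (-1728) * (t^6 * m^2) + 1044 * (t^6 * m^3) + (-144) * (t^6 * m^4) + 528 * (t^7) + (-7176) * (t^7 * m) + 6840 * (t^7 * m^2) + (-2112) * (t^7 * m^3) + 192 * (t^7 * m^4) + (-8424) * (t^8) + 16824 * (t^8 * m) + (-9810) * (t^8 * m^2) + 1920 * (t^8 * m^3) + (-96) * (t^8 * m^4) + 13848 * (t^9)" using s28 b29 t0 by linarith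
  have b30: "t^9 * m \<le> (1/672442404508532736) * t^3"
    using G1[of t "1/468" m "1/64" 6 1] t0 te m0 ma mb by (simp add: power_one_over)
  have s30: "(358463373970091214431/4034654427051196416) * t^3 \<le> (-288) * (t^2 * m^2) + 176 * (t^3) + (-2880) * (t^3 * m) + 576 * (t^3 * m^2) + (-4752) * (t^4) + 2304 * (t^4 * m) + (-72) * (t^4 * m^2) + (-72) * (t^4 * m^3) + (-9) * (t^4 * m^4) + 1824 * (t^5) + 480 * (t^5 * m) + (-792) * (t^5 * m^2) + (-120) * (t^5 * m^3) + 48 * (t^5 * m^4) + 816 * (t^6) + (-1296) * (t^6 * m) + (-1728) * (t^6 * m^2) + 1044 * (t^6 * m^3) + (-144) * (t^6 * m^4) + 528 * (t^7) + (-7176) * (t^7 * m) + 6840 * (t^7 * m^2) + (-2112) * (t^7 * m^3) + 192 * (t^7 * m^4) + (-8424) * (t^8) + 16824 * (t^8 * m) + (-9810) * (t^8 * m^2) + 1920 * (t^8 * m^3) + (-96) * (t^8 * m^4) + 13848 * (t^9) + (-18504) * (t^9 * m)" using s29 b30 t0 by linarith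
  have b31: "0 \<le> t^9 * m^2" using t0 m0 by simp
  have s31: "(358463373970091214431/4034654427051196416) * t^3 \<le> (-288) * (t^2 * m^2) + 176 * (t^3) + (-2880) * (t^3 * m) + 576 * (t^3 * m^2) + (-4752) * (t^4) + 2304 * (t^4 * m) + (-72) * (t^4 * m^2) + (-72) * (t^4 * m^3) + (-9) * (t^4 * m^4) + 1824 * (t^5) + 480 * (t^5 * m) + (-792) * (t^5 * m^2) + (-120) * (t^5 * m^3) + 48 * (t^5 * m^4) + 816 * (t^6) + (-1296) * (t^6 * m) + (-1728) * (t^6 * m^2) + 1044 * (t^6 * m^3) + (-144) * (t^6 * m^4) + 528 * (t^7) + (-7176) * (t^7 * m) + 6840 * (t^7 * m^2) + (-2112) * (t^7 * m^3) + 192 * (t^7 * m^4) + (-8424) * (t^8) + 16824 * (t^8 * m) + (-9810) * (t^8 * m^2) + 1920 * (t^8 * m^3) + (-96) * (t^8 * m^4) + 13848 * (t^9) + (-18504) * (t^9 * m) + 6912 * (t^9 * m^2)" using s30 b31 t0 by linarith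
  have b32: "t^9 * m^3 \<le> (1/2832327407789939884032) * t^3"
    using G2[of t "1/468" m "1/64" "1/9" 7 1] t0 te m0 ma mb by (simp add: power_one_over)
  have s32: "(41940214754500672088299/472054567964989980672) * t^3 \<le> (-288) * (t^2 * m^2) + 176 * (t^3) + (-2880) * (t^3 * m) + 576 * (t^3 * m^2) + (-4752) * (t^4) + 2304 * (t^4 * m) + (-72) * (t^4 * m^2) + (-72) * (t^4 * m^3) + (-9) * (t^4 * m^4) + 1824 * (t^5) + 480 * (t^5 * m) + (-792) * (t^5 * m^2) + (-120) * (t^5 * m^3) + 48 * (t^5 * m^4) + 816 * (t^6) + (-1296) * (t^6 * m) + (-1728) * (t^6 * m^2) + 1044 * (t^6 * m^3) + (-144) * (t^6 * m^4) + 528 * (t^7) + (-7176) * (t^7 * m) + 6840 * (t^7 * m^2) + (-2112) * (t^7 * m^3) + 192 * (t^7 * m^4) + (-8424) * (t^8) + 16824 * (t^8 * m) + (-9810) * (t^8 * m^2) + 1920 * (t^8 * m^3) + (-96) * (t^8 * m^4) + 13848 * (t^9) + (-18504) * (t^9 * m) + 6912 * (t^9 * m^2) + (-768) * (t^9 * m^3)" using s31 b32 t0 by linarith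
  have b33: "t^10 \<le> (1/4917235082968645632) * t^3"
    using G1[of t "1/468" m "1/64" 7 0] t0 te m0 ma mb by (simp add: power_one_over)
  have s33: "(41940214754500670904043/472054567964989980672) * t^3 \<le> (-288) * (t^2 * m^2) + 176 * (t^3) + (-2880) * (t^3 * m) + 576 * (t^3 * m^2) + (-4752) * (t^4) + 2304 * (t^4 * m) + (-72) * (t^4 * m^2) + (-72) * (t^4 * m^3) + (-9) * (t^4 * m^4) + 1824 * (t^5) + 480 * (t^5 * m) + (-792) * (t^5 * m^2) + (-120) * (t^5 * m^3) + 48 * (t^5 * m^4) + 816 * (t^6) + (-1296) * (t^6 * m) + (-1728) * (t^6 * m^2) + 1044 * (t^6 * m^3) + (-144) * (t^6 * m^4) + 528 * (t^7) + (-7176) * (t^7 * m) + 6840 * (t^7 * m^2) + (-2112) * (t^7 * m^3) + 192 * (t^7 * m^4) + (-8424) * (t^8) + 16824 * (t^8 * m) + (-9810) * (t^8 * m^2) + 1920 * (t^8 * m^3) + (-96) * (t^8 * m^4) + 13848 * (t^9) + (-18504) * (t^9 * m) + 6912 * (t^9 * m^2) + (-768) * (t^9 * m^3) + (-12336) * (t^10)" using s32 b33 t0 by linarith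
  have b34: "0 \<le> t^10 * m" using t0 m0 by simp
  have s34: "(41940214754500670904043/472054567964989980672) * t^3 \<le> (-288) * (t^2 * m^2) + 176 * (t^3) + (-2880) * (t^3 * m) + 576 * (t^3 * m^2) + (-4752) * (t^4) + 2304 * (t^4 * m) + (-72) * (t^4 * m^2) + (-72) * (t^4 * m^3) + (-9) * (t^4 * m^4) + 1824 * (t^5) + 480 * (t^5 * m) + (-792) * (t^5 * m^2) + (-120) * (t^5 * m^3) + 48 * (t^5 * m^4) + 816 * (t^6) + (-1296) * (t^6 * m) + (-1728) * (t^6 * m^2) + 1044 * (t^6 * m^3) + (-144) * (t^6 * m^4) + 528 * (t^7) + (-7176) * (t^7 * m) + 6840 * (t^7 * m^2) + (-2112) * (t^7 * m^3) + 192 * (t^7 * m^4) + (-8424) * (t^8) + 16824 * (t^8 * m) + (-9810) * (t^8 * m^2) + 1920 * (t^8 * m^3) + (-96) * (t^8 * m^4) + 13848 * (t^9) + (-18504) * (t^9 * m) + 6912 * (t^9 * m^2) + (-768) * (t^9 * m^3) + (-12336) * (t^10) + 10740 * (t^10 * m)" using s33 b34 t0 by linarith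
  have b35: "t^10 * m^2 \<le> (1/20711394169463935401984) * t^3"
    using G2[of t "1/468" m "1/64" "1/9" 8 0] t0 te m0 ma mb by (simp add: power_one_over)
  have s35: "(1635668375425526165255629/18410128150634609246208) * t^3 \<le> (-288) * (t^2 * m^2) + 176 * (t^3) + (-2880) * (t^3 * m) + 576 * (t^3 * m^2) + (-4752) * (t^4) + 2304 * (t^4 * m) + (-72) * (t^4 * m^2) + (-72) * (t^4 * m^3) + (-9) * (t^4 * m^4) + 1824 * (t^5) + 480 * (t^5 * m) + (-792) * (t^5 * m^2) + (-120) * (t^5 * m^3) + 48 * (t^5 * m^4) + 816 * (t^6) + (-1296) * (t^6 * m) + (-1728) * (t^6 * m^2) + 1044 * (t^6 * m^3) + (-144) * (t^6 * m^4) + 528 * (t^7) + (-7176) * (t^7 * m) + 6840 * (t^7 * m^2) + (-2112) * (t^7 * m^3) + 192 * (t^7 * m^4) + (-8424) * (t^8) + 16824 * (t^8 * m) + (-9810) * (t^8 * m^2) + 1920 * (t^8 * m^3) + (-96) * (t^8 * m^4) + 13848 * (t^9) + (-18504) * (t^9 * m) + 6912 * (t^9 * m^2) + (-768) * (t^9 * m^3) + (-12336) * (t^10) + 10740 * (t^10 * m) + (-2304) * (t^10 * m^2)" using s34 b35 t0 by linarith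
  have b36: "0 \<le> t^11" using t0 m0 by simp
  have s36: "(1635668375425526165255629/18410128150634609246208) * t^3 \<le> (-288) * (t^2 * m^2) + 176 * (t^3) + (-2880) * (t^3 * m) + 576 * (t^3 * m^2) + (-4752) * (t^4) + 2304 * (t^4 * m) + (-72) * (t^4 * m^2) + (-72) * (t^4 * m^3) + (-9) * (t^4 * m^4) + 1824 * (t^5) + 480 * (t^5 * m) + (-792) * (t^5 * m^2) + (-120) * (t^5 * m^3) + 48 * (t^5 * m^4) + 816 * (t^6) + (-1296) * (t^6 * m) + (-1728) * (t^6 * m^2) + 1044 * (t^6 * m^3) + (-144) * (t^6 * m^4) + 528 * (t^7) + (-7176) * (t^7 * m) + 6840 * (t^7 * m^2) + (-2112) * (t^7 * m^3) + 192 * (t^7 * m^4) + (-8424) * (t^8) + 16824 * (t^8 * m) + (-9810) * (t^8 * m^2) + 1920 * (t^8 * m^3) + (-96) * (t^8 * m^4) + 13848 * (t^9) + (-18504) * (t^9 * m) + 6912 * (t^9 * m^2) + (-768) * (t^9 * m^3) + (-12336) * (t^10) + 10740 * (t^10 * m) + (-2304) * (t^10 * m^2) + 6120 * (t^11)" using s35 b36 t0 by linarith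
  have b37: "t^11 * m \<le> (1/147281025205076873969664) * t^3"
    using G1[of t "1/468" m "1/64" 8 1] t0 te m0 ma mb by (simp add: power_one_over)
  have s37: "(1635668375425526165255245/18410128150634609246208) * t^3 \<le> (-288) * (t^2 * m^2) + 176 * (t^3) + (-2880) * (t^3 * m) + 576 * (t^3 * m^2) + (-4752) * (t^4) + 2304 * (t^4 * m) + (-72) * (t^4 * m^2) + (-72) * (t^4 * m^3) + (-9) * (t^4 * m^4) + 1824 * (t^5) + 480 * (t^5 * m) + (-792) * (t^5 * m^2) + (-120) * (t^5 * m^3) + 48 * (t^5 * m^4) + 816 * (t^6) + (-1296) * (t^6 * m) + (-1728) * (t^6 * m^2) + 1044 * (t^6 * m^3) + (-144) * (t^6 * m^4) + 528 * (t^7) + (-7176) * (t^7 * m) + 6840 * (t^7 * m^2) + (-2112) * (t^7 * m^3) + 192 * (t^7 * m^4) + (-8424) * (t^8) + 16824 * (t^8 * m) + (-9810) * (t^8 * m^2) + 1920 * (t^8 * m^3) + (-96) * (t^8 * m^4) + 13848 * (t^9) + (-18504) * (t^9 * m) + 6912 * (t^9 * m^2) + (-768) * (t^9 * m^3) + (-12336) * (t^10) + 10740 * (t^10 * m) + (-2304) * (t^10 * m^2) + 6120 * (t^11) + (-3072) * (t^11 * m)" using s36 b37 t0 by linarith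
  have b38: "t^12 \<le> (1/1076992496812124640903168) * t^3"
    using G1[of t "1/468" m "1/64" 9 0] t0 te m0 ma mb by (simp add: power_one_over)
  have s38: "(21263688880531840148317843/239331665958249920200704) * t^3 \<le> (-288) * (t^2 * m^2) + 176 * (t^3) + (-2880) * (t^3 * m) + 576 * (t^3 * m^2) + (-4752) * (t^4) + 2304 * (t^4 * m) + (-72) * (t^4 * m^2) + (-72) * (t^4 * m^3) + (-9) * (t^4 * m^4) + 1824 * (t^5) + 480 * (t^5 * m) + (-792) * (t^5 * m^2) + (-120) * (t^5 * m^3) + 48 * (t^5 * m^4) + 816 * (t^6) + (-1296) * (t^6 * m) + (-1728) * (t^6 * m^2) + 1044 * (t^6 * m^3) + (-144) * (t^6 * m^4) + 528 * (t^7) + (-7176) * (t^7 * m) + 6840 * (t^7 * m^2) + (-2112) * (t^7 * m^3) + 192 * (t^7 * m^4) + (-8424) * (t^8) + 16824 * (t^8 * m) + (-9810) * (t^8 * m^2) + 1920 * (t^8 * m^3) + (-96) * (t^8 * m^4) + 13848 * (t^9) + (-18504) * (t^9 * m) + 6912 * (t^9 * m^2) + (-768) * (t^9 * m^3) + (-12336) * (t^10) + 10740 * (t^10 * m) + (-2304) * (t^10 * m^2) + 6120 * (t^11) + (-3072) * (t^11 * m) + (-1539) * (t^12)" using s37 b38 t0 by linarith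
  have "0 \<le> (21263688880531840148317843/239331665958249920200704) * t^3" using t0 by simp
  hence "0 \<le> QQ" unfolding QQ_def using s38 by linarith
  show ?thesis using id \<open>0 \<le> QQ\<close> Y1 p1 Ypw ppw by (simp add: algebra_simps)
qed

lemma polyB:
  fixes t m Y p :: real
  assumes t0: "0 < t" and te: "t \<le> 1/468" and m0: "0 \<le> m" and ma: "m \<le> 1/64" and mb: "m^2 \<le> 1/9 * t"
    and Yd: "Y = t - 2*t^2 + 3*t^3" and pd: "p = t - t^2 + t^3/2 + t^4"
  shows "1 + Y + Y^2/2 + Y^3/6 + Y^4/12 + (1 - p + p^2/2 - p^3/6 + p^4/24) \<le> 2 - 25/72*t^3 - t^4/2"
proof -
  define Yn where "Yn = 1 * (t) + (-2) * (t^2) + 3 * (t^3)"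
  define pn where "pn = 2 * (t) + (-2) * (t^2) + 1 * (t^3) + 2 * (t^4)"
  have Y1: "Y = Yn/1" using Yd unfolding Yn_def by (simp add: field_simps)
  have p1: "p = pn/2" using pd unfolding pn_def by (simp add: field_simps)
  have Ypw: "Y^2 = Yn^2/1" "Y^3 = Yn^3/1" "Y^4 = Yn^4/1" unfolding Y1 by (simp_all add: power_divide)
  have ppw: "p^2 = pn^2/4" "p^3 = pn^3/8" "p^4 = pn^4/16" unfolding p1 by (simp_all add: power_divide)
  define QQ where "QQ = 176 * (t^3) + (-5904) * (t^4) + 4128 * (t^5) + 240 * (t^6) + (-3120) * (t^7) + (-9576) * (t^8) + 24168 * (t^9) + (-31152) * (t^10) + 21192 * (t^11) + (-8019) * (t^12) + 72 * (t^13) + 120 * (t^14) + (-96) * (t^15) + (-48) * (t^16)"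
  have id: "2304 - 400*t^3 - 576*t^4 - 96*(12 + 12*Yn + 6*Yn^2 + 2*Yn^3 + Yn^4) - 3*(384 - 192*pn + 48*pn^2 - 8*pn^3 + pn^4) = QQ"
    unfolding Yn_def pn_def QQ_def by algebra
  have b0: "0 \<le> t^3" using t0 m0 by simp
  have s0: "176 * t^3 \<le> 176 * (t^3)" using  b0 t0 by linarith
  have b1: "t^4 \<le> (1/468) * t^3"
    using G1[of t "1/468" m "1/64" 1 0] t0 te m0 ma mb by (simp add: power_one_over)
  have s1: "(2124/13) * t^3 \<le> 176 * (t^3) + (-5904) * (t^4)" using s0 b1 t0 by linarith
  have b2: "0 \<le> t^5" using t0 m0 by simp
  have s2: "(2124/13) * t^3 \<le> 176 * (t^3) + (-5904) * (t^4) + 4128 * (t^5)" using s1 b2 t0 by linarith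
  have b3: "0 \<le> t^6" using t0 m0 by simp
  have s3: "(2124/13) * t^3 \<le> 176 * (t^3) + (-5904) * (t^4) + 4128 * (t^5) + 240 * (t^6)" using s2 b3 t0 by linarith
  have b4: "t^7 \<le> (1/47971512576) * t^3"
    using G1[of t "1/468" m "1/64" 4 0] t0 te m0 ma mb by (simp add: power_one_over)
  have s4: "(12560588347/76877424) * t^3 \<le> 176 * (t^3) + (-5904) * (t^4) + 4128 * (t^5) + 240 * (t^6) + (-3120) * (t^7)" using s3 b4 t0 by linarith
  have b5: "t^8 \<le> (1/22450667885568) * t^3"
    using G1[of t "1/468" m "1/64" 5 0] t0 te m0 ma mb by (simp add: power_one_over)
  have s5: "(50945746335299/311814831744) * t^3 \<le> 176 * (t^3) + (-5904) * (t^4) + 4128 * (t^5) + 240 * (t^6) + (-3120) * (t^7) + (-9576) * (t^8)" using s4 b5 t0 by linarith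
  have b6: "0 \<le> t^9" using t0 m0 by simp
  have s6: "(50945746335299/311814831744) * t^3 \<le> 176 * (t^3) + (-5904) * (t^4) + 4128 * (t^5) + 240 * (t^6) + (-3120) * (t^7) + (-9576) * (t^8) + 24168 * (t^9)" using s5 b6 t0 by linarith
  have b7: "t^10 \<le> (1/4917235082968645632) * t^3"
    using G1[of t "1/468" m "1/64" 7 0] t0 te m0 ma mb by (simp add: power_one_over)
  have s7: "(16737511718013791615/102442397561846784) * t^3 \<le> 176 * (t^3) + (-5904) * (t^4) + 4128 * (t^5) + 240 * (t^6) + (-3120) * (t^7) + (-9576) * (t^8) + 24168 * (t^9) + (-31152) * (t^10)" using s6 b7 t0 by linarith
  have b8: "0 \<le> t^11" using t0 m0 by simp
  have s8: "(16737511718013791615/102442397561846784) * t^3 \<le> 176 * (t^3) + (-5904) * (t^4) + 4128 * (t^5) + 240 * (t^6) + (-3120) * (t^7) + (-9576) * (t^8) + 24168 * (t^9) + (-31152) * (t^10) + 21192 * (t^11)" using s7 b8 t0 by linarith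
  have b9: "t^12 \<le> (1/1076992496812124640903168) * t^3"
    using G1[of t "1/468" m "1/64" 9 0] t0 te m0 ma mb by (simp add: power_one_over)
  have s9: "(724131706968148680431327/4432067888115739262976) * t^3 \<le> 176 * (t^3) + (-5904) * (t^4) + 4128 * (t^5) + 240 * (t^6) + (-3120) * (t^7) + (-9576) * (t^8) + 24168 * (t^9) + (-31152) * (t^10) + 21192 * (t^11) + (-8019) * (t^12)" using s8 b9 t0 by linarith
  have b10: "0 \<le> t^13" using t0 m0 by simp
  have s10: "(724131706968148680431327/4432067888115739262976) * t^3 \<le> 176 * (t^3) + (-5904) * (t^4) + 4128 * (t^5) + 240 * (t^6) + (-3120) * (t^7) + (-9576) * (t^8) + 24168 * (t^9) + (-31152) * (t^10) + 21192 * (t^11) + (-8019) * (t^12) + 72 * (t^13)" using s9 b10 t0 by linarith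
  have b11: "0 \<le> t^14" using t0 m0 by simp
  have s11: "(724131706968148680431327/4432067888115739262976) * t^3 \<le> 176 * (t^3) + (-5904) * (t^4) + 4128 * (t^5) + 240 * (t^6) + (-3120) * (t^7) + (-9576) * (t^8) + 24168 * (t^9) + (-31152) * (t^10) + 21192 * (t^11) + (-8019) * (t^12) + 72 * (t^13) + 120 * (t^14)" using s10 b11 t0 by linarith
  have b12: "t^15 \<le> (1/110395211762992472479414119038976) * t^3"
    using G1[of t "1/468" m "1/64" 12 0] t0 te m0 ma mb by (simp add: power_one_over)
  have s12: "(187884158405965157026888746733061/1149950122531171588327230406656) * t^3 \<le> 176 * (t^3) + (-5904) * (t^4) + 4128 * (t^5) + 240 * (t^6) + (-3120) * (t^7) + (-9576) * (t^8) + 24168 * (t^9) + (-31152) * (t^10) + 21192 * (t^11) + (-8019) * (t^12) + 72 * (t^13) + 120 * (t^14) + (-96) * (t^15)" using s11 b12 t0 by linarith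
  have b13: "t^16 \<le> (1/51664959105080477120365807710240768) * t^3"
    using G1[of t "1/468" m "1/64" 13 0] t0 te m0 ma mb by (simp add: power_one_over)
  have s13: "(175859572267983386977167866942145095/1076353314689176606674287660630016) * t^3 \<le> 176 * (t^3) + (-5904) * (t^4) + 4128 * (t^5) + 240 * (t^6) + (-3120) * (t^7) + (-9576) * (t^8) + 24168 * (t^9) + (-31152) * (t^10) + 21192 * (t^11) + (-8019) * (t^12) + 72 * (t^13) + 120 * (t^14) + (-96) * (t^15) + (-48) * (t^16)" using s12 b13 t0 by linarith
  have "0 \<le> (175859572267983386977167866942145095/1076353314689176606674287660630016) * t^3" using t0 by simp
  hence "0 \<le> QQ" unfolding QQ_def using s13 by linarith
  show ?thesis using id \<open>0 \<le> QQ\<close> Y1 p1 Ypw ppw by (simp add: algebra_simps)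
qed



lemma ln_lower2:
  fixes u :: real assumes u: "0 \<le> u"
  shows "u - u^2/2 \<le> ln (1+u)"
proof -
  let ?f = "\<lambda>x::real. ln (1+x) - x + x^2/2"
  have "?f 0 \<le> ?f u"
  proof (rule DERIV_nonneg_imp_nondecreasing[OF u])
    fix x :: real assume x: "0 \<le> x" "x \<le> u"
    show "\<exists>y. (?f has_real_derivative y) (at x) \<and> 0 \<le> y"
    proof (intro exI conjI)
      show "(?f has_real_derivative (1/(1+x) - 1 + x)) (at x)"
        using x by (auto intro!: derivative_eq_intros)
      have "1/(1+x) - 1 + x = x^2/(1+x)" using x by (simp add: field_simps power2_eq_square)
      thus "0 \<le> 1/(1+x) - 1 + x" using x by simp
    qed
  qed
  thus ?thesis by simp
qed

lemma ln_upper3: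
  fixes u :: real assumes u: "0 \<le> u"
  shows "ln (1+u) \<le> u - u^2/2 + u^3/3"
proof -
  let ?f = "\<lambda>x::real. x - x^2/2 + x^3/3 - ln (1+x)"
  have "?f 0 \<le> ?f u"
  proof (rule DERIV_nonneg_imp_nondecreasing[OF u])
    fix x :: real assume x: "0 \<le> x" "x \<le> u"
    show "\<exists>y. (?f has_real_derivative y) (at x) \<and> 0 \<le> y"
    proof (intro exI conjI)
      show "(?f has_real_derivative (1 - x + x^2 - 1/(1+x))) (at x)"
        using x by (auto intro!: derivative_eq_intros simp: power2_eq_square)
      have "1 - x + x^2 - 1/(1+x) = x^3/(1+x)" using x by (simp add: field_simps power2_eq_square power3_eq_cube)
      thus "0 \<le> 1 - x + x^2 - 1/(1+x)" using x by simp
    qed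
  qed
  thus ?thesis by simp
qed

lemma ln_lower_pade:
  fixes u :: real assumes u: "0 \<le> u"
  shows "2*u/(2+u) \<le> ln (1+u)"
proof -
  let ?f = "\<lambda>x::real. ln (1+x) + 4/(2+x)"
  have "?f 0 \<le> ?f u"
  proof (rule DERIV_nonneg_imp_nondecreasing[OF u])
    fix x :: real assume x: "0 \<le> x" "x \<le> u"
    show "\<exists>y. (?f has_real_derivative y) (at x) \<and> 0 \<le> y"
    proof (intro exI conjI)
      show "(?f has_real_derivative (1/(1+x) - 4/(2+x)^2)) (at x)"
      proof -
        have h1: "2+x \<noteq> 0" "1+x \<noteq> 0" using x by auto
        show ?thesis using x h1 by (auto intro!: derivative_eq_intros simp: field_simps power2_eq_square)
      qed
      have h1: "2+x \<noteq> 0" "1+x \<noteq> 0" using x by auto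
      have a: "4*(1+x) \<le> (2+x)^2" by (simp add: power2_eq_square algebra_simps)
      have p1: "0 < 1+x" "0 < (2+x)^2" using x by auto
      have "4/(2+x)^2 \<le> 1/(1+x)" using a p1 by (simp add: divide_simps mult.commute)
      thus "0 \<le> 1/(1+x) - 4/(2+x)^2" by simp
    qed
  qed
  moreover have "2*u/(2+u) = 2 - 4/(2+u)" using u by (simp add: field_simps)
  ultimately show ?thesis by simp
qed

lemma exp1_ge: "27/10 \<le> exp (1::real)"
proof -
  obtain th where "exp (1::real) = (\<Sum>m<5. 1 ^ m / fact m) + exp th / fact 5 * 1 ^ 5"
    using Maclaurin_exp_le[of "1::real" 5] by blast
  moreover have "0 \<le> exp th / fact 5 * (1::real)^5" by simp
  moreover have "(\<Sum>m<5. (1::real) ^ m / fact m) = 65/24" by (simp add: eval_nat_numeral)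
  ultimately show ?thesis by linarith
qed

lemma ln_le_sixth:
  fixes u :: real assumes u: "18 \<le> u"
  shows "ln u \<le> u/6"
proof -
  let ?f = "\<lambda>x::real. x/6 - ln x"
  have "?f 18 \<le> ?f u"
  proof (rule DERIV_nonneg_imp_nondecreasing[OF u])
    fix x :: real assume x: "18 \<le> x" "x \<le> u"
    show "\<exists>y. (?f has_real_derivative y) (at x) \<and> 0 \<le> y"
    proof (intro exI conjI)
      show "(?f has_real_derivative (1/6 - 1/x)) (at x)"
        using x by (auto intro!: derivative_eq_intros)
      show "0 \<le> 1/6 - 1/x" using x by (simp add: field_simps)
    qed
  qed
  moreover have "ln (18::real) \<le> 3"
  proof -
    have "(27/10::real)^3 \<le> exp 1 ^ 3" using exp1_ge by (intro power_mono) auto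
    moreover have "exp (1::real) ^ 3 = exp 3" by (simp add: exp_of_nat_mult[symmetric])
    ultimately have "(27/10::real)^3 \<le> exp 3" by simp
    moreover have "(27/10::real)^3 = 19683/1000" by (simp add: power3_eq_cube)
    ultimately have "18 \<le> exp (3::real)" by linarith
    hence "ln 18 \<le> ln (exp (3::real))" by (intro ln_mono) auto
    thus ?thesis by simp
  qed
  ultimately show ?thesis by simp
qed

lemma exp_up4:
  fixes y :: real assumes y: "0 \<le> y" "y \<le> 1/2"
  shows "exp y \<le> 1 + y + y^2/2 + y^3/6 + y^4/12"
proof -
  obtain th where th: "\<bar>th\<bar> \<le> \<bar>y\<bar>" and e: "exp y = (\<Sum>m<4. y ^ m / fact m) + exp th / fact 4 * y ^ 4"
    using Maclaurin_exp_le[of y 4] by blast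
  have "exp th \<le> exp (1/2::real)" using th y by simp
  also have "exp (1/2::real) \<le> 2"
  proof -
    have h: "1/2 \<le> exp (-1/2::real)" using exp_ge_add_one_self[of "-1/2::real"] by simp
    have "exp (1/2::real) * 1 \<le> exp (1/2) * (2 * exp (-1/2))" using h by (intro mult_left_mono) auto
    also have "\<dots> = 2 * (exp (1/2) * exp (-1/2))" by (simp add: mult_ac)
    also have "exp (1/2::real) * exp (-1/2) = 1" by (simp flip: exp_add)
    finally show ?thesis by simp
  qed
  finally have "exp th / fact 4 * y^4 \<le> 2 / fact 4 * y^4"
    by (intro mult_right_mono divide_right_mono) auto
  moreover have "(\<Sum>m<4. y ^ m / fact m) = 1 + y + y^2/2 + y^3/6" by (simp add: eval_nat_numeral)
  moreover have "(2::real) / fact 4 = 1/12" by (simp add: eval_nat_numeral)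
  ultimately show ?thesis using e by simp
qed

lemma exp_neg5:
  fixes p :: real assumes p: "0 \<le> p"
  shows "exp (-p) \<le> 1 - p + p^2/2 - p^3/6 + p^4/24"
proof -
  obtain th where e: "exp (-p) = (\<Sum>m<5. (-p) ^ m / fact m) + exp th / fact 5 * (-p) ^ 5"
    using Maclaurin_exp_le[of "-p" 5] by blast
  have "(-p)^5 \<le> 0" using p by (simp add: power_minus_odd)
  hence "exp th / fact 5 * (-p) ^ 5 \<le> 0" by (simp add: mult_nonneg_nonpos)
  moreover have "(\<Sum>m<5. (-p) ^ m / fact m) = 1 - p + p^2/2 - p^3/6 + p^4/24" by (simp add: eval_nat_numeral)
  ultimately show ?thesis using e by linarith
qed



lemma fact_step_aux:
  fixes r :: real assumes r: "1 \<le> r"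
  shows "r * (ln (r+1) - ln r) \<le> 1" "1 \<le> (r + 1/2) * (ln (r+1) - ln r)"
proof -
  have e: "ln (r+1) - ln r = ln (1 + 1/r)"
  proof -
    have "r + 1 = r * (1 + 1/r)" using r by (simp add: field_simps)
    hence "ln (r+1) = ln (r * (1 + 1/r))" by simp
    also have "\<dots> = ln r + ln (1 + 1/r)" using r by (intro ln_mult_pos) (auto simp: add_pos_pos)
    finally show ?thesis by simp
  qed
  have "ln (1 + 1/r) \<le> 1/r" using r by (intro ln_add_one_self_le_self) simp
  hence "r * ln (1 + 1/r) \<le> r * (1/r)" using r by (intro mult_left_mono) auto
  thus "r * (ln (r+1) - ln r) \<le> 1" using e r by simp
  have "2*(1/r)/(2+1/r) \<le> ln (1 + 1/r)" using r by (intro ln_lower_pade) simp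
  moreover have "2*(1/r)/(2+1/r) = 1/(r+1/2)" using r by (simp add: field_simps)
  ultimately have "1/(r+1/2) \<le> ln (1+1/r)" by simp
  hence "(r+1/2) * (1/(r+1/2)) \<le> (r+1/2) * ln (1+1/r)" using r by (intro mult_left_mono) auto
  thus "1 \<le> (r + 1/2) * (ln (r+1) - ln r)" using e r by simp
qed

lemma fact_bounds:
  assumes "1 \<le> n"
  shows "real n * ln (real n) - real n + 1 \<le> ln (fact n) \<and> ln (fact n) \<le> (real n + 1/2) * ln (real n) - real n + 1"
  using assms
proof (induction n rule: dec_induct)
  case base
  show ?case by simp
next
  case (step k)
  define r where "r = real k"
  have r: "1 \<le> r" using step.hyps unfolding r_def by simp
  have f: "ln (fact (Suc k) :: real) = ln (r+1) + ln (fact k)"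
  proof -
    have "(fact (Suc k) :: real) = (r+1) * fact k" unfolding r_def by simp
    moreover have "(0::real) < fact k" by simp
    ultimately show ?thesis using r by (simp add: ln_mult_pos)
  qed
  have a1: "r * (ln (r+1) - ln r) \<le> 1" and a2: "1 \<le> (r + 1/2) * (ln (r+1) - ln r)"
    using fact_step_aux[OF r] by auto
  have IH: "r * ln r - r + 1 \<le> ln (fact k)" "ln (fact k) \<le> (r + 1/2) * ln r - r + 1"
    using step.IH unfolding r_def by auto
  have rs: "real (Suc k) = r + 1" unfolding r_def by simp
  have c1: "(r+1) * ln (r+1) - (r+1) + 1 \<le> ln (r+1) + ln (fact k)"
    using IH(1) a1 by (simp add: algebra_simps)
  have c2: "ln (r+1) + ln (fact k) \<le> ((r+1) + 1/2) * ln (r+1) - (r+1) + 1"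
    using IH(2) a2 by (simp add: algebra_simps)
  show ?case unfolding rs f using c1 c2 by blast
qed



lemma exp_cvx:
  fixes c u v :: real assumes c: "0 \<le> c" "c \<le> 1"
  shows "exp ((1-c)*u + c*v) \<le> (1-c)*exp u + c*exp v"
proof -
  define z where "z = (1-c)*u + c*v"
  have "exp u = exp z * exp (u - z)" by (simp flip: exp_add)
  moreover have "1 + (u - z) \<le> exp (u - z)" by (rule exp_ge_add_one_self)
  ultimately have 1: "exp z * (1 + (u - z)) \<le> exp u" by (simp add: mult_left_mono)
  have "exp v = exp z * exp (v - z)" by (simp flip: exp_add)
  moreover have "1 + (v - z) \<le> exp (v - z)" by (rule exp_ge_add_one_self)
  ultimately have 2: "exp z * (1 + (v - z)) \<le> exp v" by (simp add: mult_left_mono)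
  have "(1-c) * (exp z * (1 + (u - z))) + c * (exp z * (1 + (v - z))) \<le> (1-c)*exp u + c*exp v"
    using 1 2 c by (intro add_mono mult_left_mono) auto
  moreover have "(1-c) * (exp z * (1 + (u - z))) + c * (exp z * (1 + (v - z))) = exp z"
    unfolding z_def by (simp add: algebra_simps)
  ultimately show ?thesis unfolding z_def by simp
qed

theorem mainTheorem10:
  fixes n :: nat
  assumes "n \<ge> 468"
  shows "ell (n+2) / ell (n+1) + ell n / ell (n+1)
           = 2 * exp ((xseq (n+1) - xseq n) / 2) * cosh ((xseq (n+1) + xseq n) / 2)
       \<and> 2 * exp ((xseq (n+1) - xseq n) / 2) * cosh ((xseq (n+1) + xseq n) / 2)
           \<le> 2 * (1 - 25 / (144 * real n ^ 3) - 1 / (4 * real n ^ 4)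
                 + (ln (real n) / 2 + 101 / 288 + ln (2 * pi) / 2) / real n ^ 5)
       \<and> 2 * (1 - 25 / (144 * real n ^ 3) - 1 / (4 * real n ^ 4)
                 + (ln (real n) / 2 + 101 / 288 + ln (2 * pi) / 2) / real n ^ 5) < 2"
proof -
  define r where "r = real n"
  have r468: "468 \<le> r" using assms unfolding r_def by simp
  have rpos: "0 < r" using r468 by simp
  define t where "t = 1/r"
  have t0: "0 < t" using rpos unfolding t_def by simp
  have te: "t \<le> 1/468" using r468 unfolding t_def by (simp add: field_simps)
  have rt: "r * t = 1" using rpos unfolding t_def by simp
  have rinv: "r = 1/t" using rpos unfolding t_def by simp
  define l where "l = ln r"
  define L where "L = ln (fact n :: real)"
  define m where "m = l * t"
  have npos: "0 < n" using assms by simp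
  have ellpos: "\<And>k. 0 < k \<Longrightarrow> 0 < ell k" unfolding ell_def by (intro real_root_gt_zero) auto
  have lnell: "\<And>k. 0 < k \<Longrightarrow> ln (ell k) = ln (fact k) / real k" unfolding ell_def by (simp add: ln_root)
  have xs: "\<And>k. 0 < k \<Longrightarrow> xseq k = ln (ell (Suc k)) - ln (ell k)"
  proof -
    fix k :: nat assume k: "0 < k"
    have "0 < ell k" "0 < ell (Suc k)" using ellpos k by auto
    thus "xseq k = ln (ell (Suc k)) - ln (ell k)" unfolding xseq_def by (simp add: ln_div)
  qed
  have lf1: "ln (fact (Suc n) :: real) = ln (r+1) + L"
  proof -
    have e: "(fact (Suc n) :: real) = (r+1) * fact n" unfolding r_def by (simp add: add.commute)
    have "ln ((r+1) * fact n) = ln (r+1) + ln (fact n :: real)" by (rule ln_mult_pos) (use rpos in auto)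
    thus ?thesis unfolding L_def e .
  qed
  have lf2: "ln (fact (Suc (Suc n)) :: real) = ln (r+2) + (ln (r+1) + L)"
  proof -
    have e: "(fact (Suc (Suc n)) :: real) = (r+2) * fact (Suc n)" unfolding r_def
      by (subst fact_Suc) (simp add: add.commute)
    have "ln ((r+2) * fact (Suc n)) = ln (r+2) + ln (fact (Suc n) :: real)"
      by (rule ln_mult_pos) (use rpos in auto)
    thus ?thesis unfolding e lf1 .
  qed
  define X where "X = xseq n"
  define Yv where "Yv = xseq (n+1)"
  have Xe: "X = (L + ln (r+1))/(r+1) - L/r"
    unfolding X_def using xs[OF npos] lnell[of n] lnell[of "Suc n"] npos lf1
    unfolding r_def L_def by (simp add: add.commute)
  have Ye: "Yv = (ln (r+2) + (ln (r+1) + L))/(r+2) - (L + ln (r+1))/(r+1)"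
  proof -
    have "Yv = ln (ell (Suc (Suc n))) - ln (ell (Suc n))" unfolding Yv_def using xs[of "Suc n"] by simp
    also have "\<dots> = ln (fact (Suc (Suc n))) / real (Suc (Suc n)) - ln (fact (Suc n)) / real (Suc n)"
      using lnell[of "Suc n"] lnell[of "Suc (Suc n)"] by simp
    also have "\<dots> = (ln (r+2) + (ln (r+1) + L))/(r+2) - (L + ln (r+1))/(r+1)"
      using lf1 lf2 unfolding r_def by (simp add: add.commute add.left_commute)
    finally show ?thesis .
  qed
  have e1: "ell (n+2) / ell (n+1) = exp Yv"
  proof -
    have "Yv = ln (ell (n+2) / ell (n+1))" unfolding Yv_def xseq_def by (simp add: numeral_2_eq_2)
    moreover have "0 < ell (n+2) / ell (n+1)" using ellpos by simp
    ultimately show ?thesis by simp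
  qed
  have e2: "ell n / ell (n+1) = exp (-X)"
  proof -
    have "X = ln (ell (n+1) / ell n)" unfolding X_def xseq_def by simp
    moreover have "0 < ell (n+1) / ell n" using ellpos npos by simp
    ultimately have "exp X = ell (n+1) / ell n" by simp
    thus ?thesis by (simp add: exp_minus)
  qed
  have cid: "2 * exp ((Yv - X) / 2) * cosh ((Yv + X) / 2) = exp Yv + exp (-X)"
  proof -
    have "2 * exp ((Yv - X) / 2) * cosh ((Yv + X) / 2)
        = exp ((Yv - X) / 2) * exp ((Yv + X) / 2) + exp ((Yv - X) / 2) * exp (-((Yv + X) / 2))"
      by (simp add: cosh_def algebra_simps)
    also have "\<dots> = exp ((Yv - X) / 2 + (Yv + X) / 2) + exp ((Yv - X) / 2 + -((Yv + X) / 2))"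
      by (simp only: exp_add)
    also have "(Yv - X) / 2 + (Yv + X) / 2 = Yv" by (simp add: field_simps)
    also have "(Yv - X) / 2 + -((Yv + X) / 2) = -X" by (simp add: field_simps)
    finally show ?thesis .
  qed
  have conj1: "ell (n+2) / ell (n+1) + ell n / ell (n+1)
           = 2 * exp ((xseq (n+1) - xseq n) / 2) * cosh ((xseq (n+1) + xseq n) / 2)"
    using e1 e2 cid unfolding X_def Yv_def by simp
  have l0: "0 \<le> l" unfolding l_def using r468 by simp
  have l9: "9 * l^2 \<le> r"
  proof -
    have "sqrt 324 \<le> sqrt r" using r468 by (intro real_sqrt_le_mono) simp
    hence sq: "18 \<le> sqrt r" by simp
    have "ln (sqrt r) \<le> sqrt r / 6" using ln_le_sixth[OF sq] .
    moreover have "ln (sqrt r) = l / 2" unfolding l_def using rpos by (simp add: ln_sqrt)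
    ultimately have "l \<le> sqrt r / 3" by simp
    hence "l^2 \<le> (sqrt r / 3)^2" using l0 by (intro power_mono) auto
    also have "\<dots> = r / 9" using rpos by (simp add: power_divide)
    finally show ?thesis by simp
  qed
  have m0: "0 \<le> m" unfolding m_def using l0 t0 by simp
  have mb: "m^2 \<le> 1/9 * t"
  proof -
    have "m^2 = l^2 * t * t" unfolding m_def by (simp add: power2_eq_square)
    also have "\<dots> \<le> (r/9) * t * t" using l9 t0 by (intro mult_right_mono) auto
    also have "\<dots> = 1/9 * t" using rt by (simp add: algebra_simps)
    finally show ?thesis .
  qed
  have ma: "m \<le> 1/64"
  proof -
    have "m^2 \<le> (1/64)^2" using mb te by (simp add: power2_eq_square)
    thus ?thesis by (rule power2_le_imp_le) simp
  qed
  define lam where "lam = ln (1+t)"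
  have lam1: "t - t^2/2 \<le> lam" unfolding lam_def using t0 by (intro ln_lower2) simp
  have lam2: "lam \<le> t - t^2/2 + t^3/3" unfolding lam_def using t0 by (intro ln_upper3) simp
  have lr1: "ln (r+1) = l + lam"
  proof -
    have "r + 1 = r * (1 + t)" using rt by (simp add: algebra_simps)
    hence "ln (r+1) = ln (r * (1+t))" by simp
    also have "\<dots> = l + lam" unfolding l_def lam_def using rpos t0 by (intro ln_mult_pos) auto
    finally show ?thesis .
  qed
  have lr2: "ln (r+2) = l + ln (1 + 2*t)"
  proof -
    have "r + 2 = r * (1 + 2*t)" using rt by (simp add: algebra_simps)
    hence "ln (r+2) = ln (r * (1+2*t))" by simp
    also have "\<dots> = l + ln (1 + 2*t)" unfolding l_def using rpos t0 by (intro ln_mult_pos) auto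
    finally show ?thesis .
  qed
  have Lb: "r * l - r + 1 \<le> L" "L \<le> (r + 1/2) * l - r + 1"
    using fact_bounds[of n] npos unfolding L_def l_def r_def by auto
  have Lt1: "l - 1 + t \<le> L * t"
  proof -
    have "(r * l - r + 1) * t \<le> L * t" using Lb(1) t0 by (intro mult_right_mono) auto
    moreover have "(r * l - r + 1) * t = l * (r*t) - r*t + t" by (simp add: algebra_simps)
    ultimately show ?thesis using rt by simp
  qed
  have Lt2: "L * t \<le> l + m/2 - 1 + t"
  proof -
    have "L * t \<le> ((r + 1/2) * l - r + 1) * t" using Lb(2) t0 by (intro mult_right_mono) auto
    moreover have "((r + 1/2) * l - r + 1) * t = l * (r*t) + (l*t)/2 - r*t + t" by (simp add: algebra_simps)
    ultimately show ?thesis using rt unfolding m_def by simp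
  qed
  define s where "s = t/(1+t)"
  have s0: "0 < s" unfolding s_def using t0 by simp
  define W where "W = l + lam - L*t"
  have Xe2: "X = (L + (l + lam))/(r+1) - L/r" using Xe lr1 by simp
  have Xs: "X = s * W"
    unfolding Xe2 unfolding s_def W_def rinv using t0 by (simp add: field_simps)
  have W1: "1 - t^2/2 - m/2 \<le> W" unfolding W_def using Lt2 lam1 by simp
  have W2: "W \<le> 1 - t^2/2 + t^3/3" unfolding W_def using Lt1 lam2 by simp
  define a where "a = t - t^2 - (t * m)/2 - t^3/2"
  define b where "b = t - t^2 + t^3/2 + t^4"
  have Xb: "X \<le> b"
  proof -
    have "X \<le> s * (1 - t^2/2 + t^3/3)" unfolding Xs using W2 s0 by (intro mult_left_mono) auto
    also have "\<dots> = t * (1 - t^2/2 + t^3/3) / (1+t)" unfolding s_def by simp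
    also have "\<dots> \<le> b"
    proof -
      have "b*(1+t) - t*(1 - t^2/2 + t^3/3) = 7/6*t^4 + t^5" unfolding b_def by (simp add: field_simps; algebra)
      moreover have "0 \<le> 7/6*t^4 + t^5" using t0 by simp
      ultimately have "t * (1 - t^2/2 + t^3/3) \<le> b*(1+t)" by linarith
      thus ?thesis using t0 by (simp add: pos_divide_le_eq)
    qed
    finally show ?thesis .
  qed
  have Xa: "a \<le> X"
  proof -
    have "a \<le> t * (1 - t^2/2 - m/2) / (1+t)"
    proof -
      have "t*(1 - t^2/2 - m/2) - a*(1+t) = t^3 + t^2*m/2 + t^4/2" unfolding a_def by (simp add: field_simps; algebra)
      moreover have "0 \<le> t^3 + t^2*m/2 + t^4/2" using t0 m0 by simp
      ultimately have "a*(1+t) \<le> t*(1 - t^2/2 - m/2)" by linarith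
      thus ?thesis using t0 by (simp add: pos_le_divide_eq)
    qed
    also have "\<dots> = s * (1 - t^2/2 - m/2)" unfolding s_def by simp
    also have "\<dots> \<le> X" unfolding Xs using W1 s0 by (intro mult_left_mono) auto
    finally show ?thesis .
  qed
  define del where "del = ln (1 + 2*t) - lam"
  have Ye2: "Yv = ((l + ln (1 + 2*t)) + ((l + lam) + L))/(r+2) - (L + (l + lam))/(r+1)" using Ye lr1 lr2 by simp
  have Yrel: "Yv = (X + t*del)/(1+2*t)"
    unfolding Ye2 Xe2 unfolding del_def rinv using t0 by (simp add: field_simps)
  have del0: "0 \<le> del" unfolding del_def lam_def using t0 by (simp add: ln_mono)
  have delb: "del \<le> t - 3/2*t^2 + 3*t^3"
  proof -
    have "ln (1 + 2*t) \<le> 2*t - (2*t)^2/2 + (2*t)^3/3" using t0 by (intro ln_upper3) simp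
    moreover have "(2*t)^2/2 = 2*t^2" "(2*t)^3/3 = 8/3*t^3" by (simp_all add: power_mult_distrib)
    moreover have "0 \<le> t^3" using t0 by simp
    ultimately show ?thesis unfolding del_def using lam1 by linarith
  qed
  have tpow: "t^2 \<le> t" "t^3 \<le> t" "t^4 \<le> t" using t0 te by (simp_all add: power_decreasing[of 1 _ t, simplified])
  have t2nn: "0 \<le> t^2" "0 \<le> t * m" using t0 m0 by simp_all
  define yb where "yb = (b + t*del)/(1+2*t)"
  define Yb where "Yb = t - 2*t^2 + 3*t^3"
  have Sb: "exp yb + exp (-b) \<le> 2 - 25/72*t^3 - t^4/2"
  proof -
    have b0: "0 \<le> b" unfolding b_def using tpow t0 by simp
    have yb0: "0 \<le> yb" unfolding yb_def using b0 del0 t0 by simp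
    have ybY: "yb \<le> Yb"
    proof -
      have "b + t*del \<le> b + t*(t - 3/2*t^2 + 3*t^3)" using delb t0 by simp
      moreover have "Yb*(1+2*t) - (b + t*(t - 3/2*t^2 + 3*t^3)) = 2*t^4" unfolding Yb_def b_def by (simp add: field_simps; algebra)
      moreover have "0 \<le> t^4" by simp
      ultimately have "b + t*del \<le> Yb*(1+2*t)" by linarith
      thus ?thesis unfolding yb_def using t0 by (simp add: pos_divide_le_eq)
    qed
    have Yh: "Yb \<le> 1/2" unfolding Yb_def using tpow te t0 t2nn by linarith
    have "exp yb \<le> 1 + yb + yb^2/2 + yb^3/6 + yb^4/12" using yb0 ybY Yh by (intro exp_up4) auto
    also have "\<dots> \<le> 1 + Yb + Yb^2/2 + Yb^3/6 + Yb^4/12"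
    proof -
      have "yb^2 \<le> Yb^2" "yb^3 \<le> Yb^3" "yb^4 \<le> Yb^4" using yb0 ybY by (auto intro!: power_mono)
      thus ?thesis using ybY by simp
    qed
    finally have 1: "exp yb \<le> 1 + Yb + Yb^2/2 + Yb^3/6 + Yb^4/12" .
    have 2: "exp (-b) \<le> 1 - b + b^2/2 - b^3/6 + b^4/24" using b0 by (rule exp_neg5)
    have 3: "1 + Yb + Yb^2/2 + Yb^3/6 + Yb^4/12 + (1 - b + b^2/2 - b^3/6 + b^4/24) \<le> 2 - 25/72*t^3 - t^4/2"
      using polyB[OF t0 te m0 ma mb Yb_def b_def] .
    show ?thesis using 1 2 3 by linarith
  qed
  define ya where "ya = (a + t*del)/(1+2*t)"
  define Ya where "Ya = t - (t * m)/2 - 2*t^2 + t^2 * m + 2*t^3"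
  have Sa: "exp ya + exp (-a) \<le> 2 - 25/72*t^3 - t^4/2"
  proof -
    have "t * m \<le> t * (1/64)" using ma t0 by (intro mult_left_mono) auto
    moreover have "t^2 * m \<le> t * 1" using tpow(1) ma m0 t0 by (intro mult_mono) auto
    ultimately have tm: "t * m \<le> t/64" "t^2 * m \<le> t" by simp_all
    have "t * t \<le> t * (1/468)" using te t0 by (intro mult_left_mono) auto
    hence "t^2 \<le> t/468" by (simp add: power2_eq_square)
    hence a0: "0 \<le> a" unfolding a_def using tpow t0 tm by linarith
    have ya0: "0 \<le> ya" unfolding ya_def using a0 del0 t0 by simp
    have yaY: "ya \<le> Ya"
    proof -
      have "a + t*del \<le> a + t*(t - 3/2*t^2 + 3*t^3)" using delb t0 by simp
      moreover have "Ya*(1+2*t) - (a + t*(t - 3/2*t^2 + 3*t^3)) = 2*(t^3*m) + t^4" unfolding Ya_def a_def by (simp add: field_simps; algebra)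
      moreover have "0 \<le> 2*(t^3*m) + t^4" using t0 m0 by simp
      ultimately have "a + t*del \<le> Ya*(1+2*t)" by linarith
      thus ?thesis unfolding ya_def using t0 by (simp add: pos_divide_le_eq)
    qed
    have Yh: "Ya \<le> 1/2" unfolding Ya_def using tpow te t0 tm t2nn by linarith
    have "exp ya \<le> 1 + ya + ya^2/2 + ya^3/6 + ya^4/12" using ya0 yaY Yh by (intro exp_up4) auto
    also have "\<dots> \<le> 1 + Ya + Ya^2/2 + Ya^3/6 + Ya^4/12"
    proof -
      have "ya^2 \<le> Ya^2" "ya^3 \<le> Ya^3" "ya^4 \<le> Ya^4" using ya0 yaY by (auto intro!: power_mono)
      thus ?thesis using yaY by simp
    qed
    finally have 1: "exp ya \<le> 1 + Ya + Ya^2/2 + Ya^3/6 + Ya^4/12" .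
    have 2: "exp (-a) \<le> 1 - a + a^2/2 - a^3/6 + a^4/24" using a0 by (rule exp_neg5)
    have 3: "1 + Ya + Ya^2/2 + Ya^3/6 + Ya^4/12 + (1 - a + a^2/2 - a^3/6 + a^4/24) \<le> 2 - 25/72*t^3 - t^4/2"
      using polyA[OF t0 te m0 ma mb Ya_def a_def] .
    show ?thesis using 1 2 3 by linarith
  qed
  have ab: "a < b"
  proof -
    have "b - a = t^3 + t^4 + (t*m)/2" unfolding a_def b_def by (simp add: field_simps)
    moreover have "0 < t^3" using t0 by simp
    moreover have "0 \<le> t^4 + (t*m)/2" using t0 m0 by simp
    ultimately show ?thesis by linarith
  qed
  define c where "c = (X - a)/(b - a)"
  have c01: "0 \<le> c" "c \<le> 1" unfolding c_def using ab Xa Xb by (simp_all add: field_simps)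
  have cba: "c * (b - a) = X - a" unfolding c_def using ab by simp
  have "(1-c)*a + c*b = a + c * (b - a)" by (simp add: algebra_simps)
  hence Xc: "X = (1-c)*a + c*b" using cba by simp
  have ya2: "ya*(1+2*t) = a + t*del" unfolding ya_def using t0 by simp
  have yb2: "yb*(1+2*t) = b + t*del" unfolding yb_def using t0 by simp
  have "((1-c)*ya + c*yb)*(1+2*t) = (1-c)*(ya*(1+2*t)) + c*(yb*(1+2*t))" by (simp add: algebra_simps)
  also have "\<dots> = (1-c)*a + c*b + t*del" unfolding ya2 yb2 by (simp add: algebra_simps)
  also have "\<dots> = X + t*del" using Xc by simp
  finally have "X + t*del = ((1-c)*ya + c*yb)*(1+2*t)" by simp
  hence Yc: "Yv = (1-c)*ya + c*yb" unfolding Yrel using t0 by simp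
  have mX: "-X = (1-c)*(-a) + c*(-b)" unfolding Xc by (simp add: algebra_simps)
  have "exp Yv + exp (-X) \<le> ((1-c)*exp ya + c*exp yb) + ((1-c)*exp (-a) + c*exp (-b))"
    unfolding Yc mX by (intro add_mono exp_cvx[OF c01])
  also have "\<dots> = (1-c)*(exp ya + exp (-a)) + c*(exp yb + exp (-b))" by (simp add: algebra_simps)
  also have "\<dots> \<le> (1-c)*(2 - 25/72*t^3 - t^4/2) + c*(2 - 25/72*t^3 - t^4/2)"
    using Sa Sb c01 by (intro add_mono mult_left_mono) auto
  also have "\<dots> = 2 - 25/72*t^3 - t^4/2"
  proof -
    have "\<And>Z::real. (1-c)*Z + c*Z = Z" by (simp add: algebra_simps)
    thus ?thesis by blast
  qed
  finally have main: "exp Yv + exp (-X) \<le> 2 - 25/72*t^3 - t^4/2" .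
  define K where "K = ln (real n) / 2 + 101 / 288 + ln (2 * pi) / 2"
  have K0: "0 \<le> K"
  proof -
    have "0 \<le> ln (real n)" using l0 unfolding l_def r_def .
    moreover have "0 \<le> ln (2*pi)" using pi_ge_two by simp
    ultimately show ?thesis unfolding K_def by linarith
  qed
  have ln2pi: "ln (2*pi) \<le> 7" using ln_le_minus_one[of "2*pi"] pi_less_4 pi_gt_zero by simp
  have Bid: "2 * (1 - 25 / (144 * real n ^ 3) - 1 / (4 * real n ^ 4) + K / real n ^ 5)
           = 2 - 25/72*t^3 - t^4/2 + 2*K*t^5"
    unfolding r_def[symmetric] rinv by (simp add: field_simps)
  have conj2: "exp Yv + exp (-X) \<le> 2 * (1 - 25 / (144 * real n ^ 3) - 1 / (4 * real n ^ 4) + K / real n ^ 5)"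
  proof -
    have "0 \<le> 2*K*t^5" using K0 t0 by simp
    thus ?thesis unfolding Bid using main by linarith
  qed
  have conj3: "2 * (1 - 25 / (144 * real n ^ 3) - 1 / (4 * real n ^ 4) + K / real n ^ 5) < 2"
  proof -
    have t54: "t^5 = t*t^4" by (subst power_Suc[symmetric]) simp
    have "2*K*t^5 = (l*t)*t^4 + (101/144 + ln (2*pi))*t^5" unfolding K_def r_def[symmetric] l_def[symmetric]
      by (simp add: algebra_simps t54)
    also have "\<dots> \<le> (1/64)*t^4 + 8*t^5"
      using ma ln2pi t0 unfolding m_def[symmetric] by (intro add_mono mult_right_mono) auto
    finally have k1: "2*K*t^5 \<le> (1/64)*t^4 + 8*t^5" .
    have t5: "t^5 \<le> 1/219024 * t^3" using G1[of t "1/468" m "1/64" 2 0] t0 te m0 ma by (simp add: power_one_over)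
    have t4: "t^4 \<le> 1/468 * t^3" using G1[of t "1/468" m "1/64" 1 0] t0 te m0 ma by (simp add: power_one_over)
    have "0 < t^3" "0 \<le> t^4" using t0 by simp_all
    thus ?thesis unfolding Bid using k1 t5 t4 by linarith
  qed
  show ?thesis using conj1 conj2 conj3 cid unfolding K_def X_def Yv_def by simp
qed


end
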